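(* Let $(V,\langle\cdot\,,\cdot\rangle_V)$ be an admissible module and $\Omega_1,\ldots,\Omega_l$ symmetric linear operators on $V$ (i.e. $\langle\Omega_kv,w\rangle_V=\langle v,\Omega_kw\rangle_V$ for all $v,w$) such that $\Omega_k^2=-\mathrm{Id}_V$ for $k=1,\ldots,l$ and $\Omega_k\Omega_j=-\Omega_j\Omega_k$ for all $k\neq j$. Then for any $w\in V$ with $\langle w,w\rangle_V=1$ there is a vector $\tilde w\in V$ satisfying $\langle\tilde w,\Omega_k\tilde w\rangle_V=0$ for all $k=1,\ldots,l$ and $\langle\tilde w,\tilde w\rangle_V=1$.
   Context: A scalar product is a real symmetric non-degenerate bilinear form. An admissible module is a real vector space $V$ which is a module over a Clifford algebra $\mathrm{Cl}_{r,s}$ (generated by $\mathbb R^{r,s}$ with $z^2=-\langle z,z\rangle\cdot1$), with representation $z\mapsto J_z$, together with a scalar product $\langle\cdot\,,\cdot\rangle_V$ satisfying $\langle J_zu,v\rangle_V=-\langle u,J_zv\rangle_V$ for all $z\in\mathbb R^{r,s}$, $u,v\in V$. *)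

theory Defs
  imports "HOL-Analysis.Analysis"
begin

text \<open>The standard scalar product of signature (r,s) on R^{r,s}; vectors of R^{r,s}
  are represented as functions nat => real, of which only the coordinates i < r+s matter.\<close>
definition eta_rs :: "nat \<Rightarrow> nat \<Rightarrow> real" where
  "eta_rs r i = (if i < r then 1 else -1)"

definition ip_rs :: "nat \<Rightarrow> nat \<Rightarrow> (nat \<Rightarrow> real) \<Rightarrow> (nat \<Rightarrow> real) \<Rightarrow> real" where
  "ip_rs r s z w = (\<Sum>i<r+s. eta_rs r i * z i * w i)"

definition scalar_product :: "('v::real_vector \<Rightarrow> 'v \<Rightarrow> real) \<Rightarrow> bool" where
  "scalar_product B \<longleftrightarrow>
     (\<forall>u. linear (B u)) \<and> (\<forall>u v. B u v = B v u) \<and> (\<forall>u. (\<forall>v. B u v = 0) \<longrightarrow> u = 0)"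

text \<open>The representation z |-> J_z, linear in z, determined by the images Jg i of the
  standard basis vectors e_i, i < r+s.\<close>
definition Jz :: "nat \<Rightarrow> nat \<Rightarrow> (nat \<Rightarrow> 'v \<Rightarrow> 'v::real_vector) \<Rightarrow> (nat \<Rightarrow> real) \<Rightarrow> 'v \<Rightarrow> 'v" where
  "Jz r s Jg z v = (\<Sum>i<r+s. z i *\<^sub>R Jg i v)"

definition admissible_module ::
  "nat \<Rightarrow> nat \<Rightarrow> (nat \<Rightarrow> 'v \<Rightarrow> 'v::real_vector) \<Rightarrow> ('v \<Rightarrow> 'v \<Rightarrow> real) \<Rightarrow> bool" where
  "admissible_module r s Jg B \<longleftrightarrow>
     scalar_product B \<and>
     (\<forall>i<r+s. linear (Jg i)) \<and>
     (\<forall>z v. Jz r s Jg z (Jz r s Jg z v) = - (ip_rs r s z z) *\<^sub>R v) \<and>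
     (\<forall>z u v. B (Jz r s Jg z u) v = - B u (Jz r s Jg z v))"

end

theory Submission
  imports Defs
begin

lemma bil_expand:
  fixes B :: "'v::real_vector \<Rightarrow> 'v \<Rightarrow> real"
  assumes L: "\<forall>u. linear (B u)" and S: "\<forall>u v. B u v = B v u"
  shows "B (a *\<^sub>R w + b *\<^sub>R v) (c *\<^sub>R x + d *\<^sub>R y)
     = a*c * B w x + a*d * B w y + b*c * B v x + b*d * B v y"
proof -
  have R: "B u (c *\<^sub>R x + d *\<^sub>R y) = c * B u x + d * B u y" for u
    using L[rule_format, of u] by (simp add: linear_add linear_scale)
  have Lft: "B (a *\<^sub>R w + b *\<^sub>R v) z = a * B w z + b * B v z" for z
  proof -
    have "B (a *\<^sub>R w + b *\<^sub>R v) z = B z (a *\<^sub>R w + b *\<^sub>R v)" using S by metis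
    also have "\<dots> = a * B z w + b * B z v"
      using L[rule_format, of z] by (simp add: linear_add linear_scale)
    finally show ?thesis using S by metis
  qed
  have "B (a *\<^sub>R w + b *\<^sub>R v) (c *\<^sub>R x + d *\<^sub>R y)
     = c * B (a *\<^sub>R w + b *\<^sub>R v) x + d * B (a *\<^sub>R w + b *\<^sub>R v) y" by (rule R)
  also have "\<dots> = c * (a * B w x + b * B v x) + d * (a * B w y + b * B v y)"
    by (simp add: Lft)
  finally show ?thesis by (simp add: algebra_simps)
qed

lemma bil_scale:
  fixes B :: "'v::real_vector \<Rightarrow> 'v \<Rightarrow> real"
  assumes L: "\<forall>u. linear (B u)" and S: "\<forall>u v. B u v = B v u"
  shows "B (a *\<^sub>R w) (c *\<^sub>R x) = a*c * B w x"
  using bil_expand[OF L S, of a w 0 w c x 0 x] by simp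

theorem lemma2p9:
  fixes r s l :: nat
    and Jg :: "nat \<Rightarrow> 'v::euclidean_space \<Rightarrow> 'v"
    and B :: "'v \<Rightarrow> 'v \<Rightarrow> real"
    and \<Omega> :: "nat \<Rightarrow> 'v \<Rightarrow> 'v"
    and w :: 'v
  assumes adm: "admissible_module r s Jg B"
    and lin: "\<forall>k<l. linear (\<Omega> k)"
    and sym: "\<forall>k<l. \<forall>v u. B (\<Omega> k v) u = B v (\<Omega> k u)"
    and sq: "\<forall>k<l. \<forall>v. \<Omega> k (\<Omega> k v) = - v"
    and anti: "\<forall>k<l. \<forall>j<l. k \<noteq> j \<longrightarrow> (\<forall>v. \<Omega> k (\<Omega> j v) = - \<Omega> j (\<Omega> k v))"
    and w1: "B w w = 1"
  shows "\<exists>w'. (\<forall>k<l. B w' (\<Omega> k w') = 0) \<and> B w' w' = 1"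
proof -
  have L: "\<forall>u. linear (B u)" and S: "\<forall>u v. B u v = B v u"
    using adm unfolding admissible_module_def scalar_product_def by auto
  have neg: "B u (- v) = - B u v" for u v
    using L[rule_format, of u] by (simp add: linear_neg)
  have negl: "B (- u) v = - B u v" for u v
    using neg S by metis
  have main: "m \<le> l \<Longrightarrow> \<exists>w'. (\<forall>k<m. B w' (\<Omega> k w') = 0) \<and> B w' w' = 1" for m
  proof (induction m)
    case 0
    then show ?case using w1 by auto
  next
    case (Suc m)
    then obtain u where u0: "\<forall>k<m. B u (\<Omega> k u) = 0" and u1: "B u u = 1" by auto
    have ml: "m < l" using Suc by auto
    define Om where "Om = \<Omega> m"
    have Olin: "Om (a *\<^sub>R x + b *\<^sub>R y) = a *\<^sub>R Om x + b *\<^sub>R Om y" for a b x y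
      using lin ml unfolding Om_def by (simp add: linear_add linear_scale)
    have Osym: "B (Om x) y = B x (Om y)" for x y using sym ml unfolding Om_def by auto
    have Oneg: "Om (- x) = - Om x" for x
      using lin ml unfolding Om_def by (simp add: linear_neg)
    have Osq: "Om (Om x) = - x" for x using sq ml unfolding Om_def by auto
    define q where "q = B u (Om u)"
    define Sq where "Sq = sqrt (1 + q^2)"
    have Sq1: "Sq \<ge> 1" unfolding Sq_def by simp
    define a where "a = sqrt ((Sq + 1) / 2)"
    have a2: "a^2 = (Sq+1)/2" unfolding a_def using Sq1 by simp
    have apos: "a > 0" unfolding a_def using Sq1 by simp
    define b where "b = q / (2*a)"
    have SqSq: "Sq^2 = 1 + q^2" unfolding Sq_def by simp
    have e1: "a^2 - b^2 = 1"
    proof -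
      have "b^2 = q^2 / (4 * a^2)" unfolding b_def by (simp add: power_divide power_mult_distrib)
      also have "\<dots> = (Sq^2 - 1) / (2 * (Sq + 1))" using a2 SqSq by simp
      also have "\<dots> = (Sq - 1) / 2" using Sq1
        by (simp add: field_simps power2_eq_square)
      finally show ?thesis using a2 by (simp add: field_simps)
    qed
    have e2: "2*a*b = q" unfolding b_def using apos by simp
    have OuOu: "B (Om u) (Om u) = -1" using Osym[of u "Om u"] Osq[of u] neg u1 by simp
    have Ouu: "B (Om u) u = q" unfolding q_def using S by metis
    define c where "c = 1 / Sq"
    have c2: "c^2 * Sq^2 = 1" unfolding c_def using Sq1
      by (simp add: power_divide)
    define v where "v = (c*a) *\<^sub>R u + (c*b) *\<^sub>R Om u"
    have Bvv: "B v v = c^2 * (a^2 - b^2 + 2*a*b*q)"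
      unfolding v_def bil_expand[OF L S] u1 OuOu q_def[symmetric] Ouu
      by (simp add: algebra_simps power2_eq_square)
    also have "\<dots> = c^2 * (1 + q^2)" using e1 e2 by (simp add: power2_eq_square)
    also have "\<dots> = c^2 * Sq^2" using SqSq by simp
    finally have "B v v = 1" using c2 by simp
    moreover have "B v (\<Omega> m v) = 0"
    proof -
      have Omv: "\<Omega> m v = (-(c*b)) *\<^sub>R u + (c*a) *\<^sub>R Om u"
        unfolding v_def Om_def[symmetric] Olin Osq by (simp add: algebra_simps)
      have "B v (\<Omega> m v) = c^2 * (q*(a^2-b^2) - 2*a*b)"
        unfolding Omv unfolding v_def bil_expand[OF L S] u1 OuOu q_def[symmetric] Ouu
        by (simp add: algebra_simps power2_eq_square)
      thus ?thesis using e1 e2 by simp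
    qed
    moreover have "B v (\<Omega> k v) = 0" if km: "k < m" for k
    proof -
      have kl: "k < l" and kne: "k \<noteq> m" using km ml by auto
      define P where "P = \<Omega> k"
      have Plin: "P (x *\<^sub>R y + z *\<^sub>R t) = x *\<^sub>R P y + z *\<^sub>R P t" for x y z t
        using lin kl unfolding P_def by (simp add: linear_add linear_scale)
      have Psym: "B (P x) y = B x (P y)" for x y using sym kl unfolding P_def by auto
      have PO: "P (Om x) = - Om (P x)" for x unfolding P_def Om_def using anti[rule_format, OF kl ml kne] by blast
      have t1: "B u (P (Om u)) + B (Om u) (P u) = 0"
      proof -
        have "B (Om u) (P u) = B u (Om (P u))" by (rule Osym)
        thus ?thesis using PO[of u] neg by simp
      qed
      have t2: "B (Om u) (P (Om u)) = B u (P u)"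
      proof -
        have "B (Om u) (P (Om u)) = B u (Om (P (Om u)))" by (rule Osym)
        also have "Om (P (Om u)) = - Om (Om (P u))" using PO[of u] Oneg by simp
        also have "\<dots> = P u" using Osq by simp
        finally show ?thesis .
      qed
      have "B v (\<Omega> k v) = B v ((c*a) *\<^sub>R P u + (c*b) *\<^sub>R P (Om u))"
        unfolding v_def P_def[symmetric] Plin by simp
      also have "\<dots> = (c*a)*(c*a) * B u (P u) + (c*a)*(c*b) * (B u (P (Om u)) + B (Om u) (P u))
            + (c*b)*(c*b) * B (Om u) (P (Om u))"
        unfolding v_def bil_expand[OF L S] by (simp add: algebra_simps)
      also have "\<dots> = 0" using t1 t2 u0 km unfolding P_def by simp
      finally show ?thesis .
    qed
    ultimately show ?case by (metis less_Suc_eq)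
  qed
  show ?thesis using main[of l] by simp
qed

end
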